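(* Let $q\geq 2$ be an integer and $\mathbf{r}=(r_1,\ldots,r_{q-1})\in\mathbb{N}_0^{q-1}$ with $r_1=\max\mathbf{r}$. Then $\mathscr{W}^{(q)}_{\mathbf{r}}\neq\emptyset$ if and only if both (i) $q\nmid\|\mathbf{r}\|$ and (ii) $\max\mathbf{r}\leq|\mathbf{r}|_q$.
   Context: A composition of $n\in\mathbb{N}_0$ is a finite sequence $\delta=(\delta_1,\ldots,\delta_s)$ of positive integers with $\sum_i\delta_i=n$; write $\ell(\delta)=s$; the unique composition of $0$ is the empty composition. Partial sums: $\delta^+_j=\sum_{i=1}^j\delta_i$. For a positive integer $q$, a composition $\delta$ is called $q'$-cumulative if it is nonempty and $q\nmid\delta^+_j$ for all $1\leq j\leq\ell(\delta)$. For $\mathbf{r}=(r_1,\ldots,r_{q-1})\in\mathbb{N}_0^{q-1}$, let $\mu$ be the partition with exactly $r_i$ parts equal to $i$ for each $1\le i\le q-1$ and no other parts, and let $\mathscr{W}^{(q)}_{\mathbf{r}}$ be the set of $q'$-cumulative compositions that are rearrangements of $\mu$. Define $\|\mathbf{r}\|=\sum_{i=1}^{q-1}ir_i$, $|\mathbf{r}|_q=(q-1)+\sum_{i=2}^{q-1}(q-i)r_i$, and $\max\mathbf{r}=\max\{r_1,\ldots,r_{q-1}\}$. *)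

theory Defs
  imports Main "HOL-Library.Multiset"
begin

text \<open>Compositions are lists of positive integers; partial sums are sums of prefixes.
  The tuple r = (r_1,...,r_{q-1}) is a function nat => nat of which only the
  values at 1..q-1 are used.\<close>

definition composition :: "nat list \<Rightarrow> bool" where
  "composition \<delta> \<longleftrightarrow> (\<forall>x\<in>set \<delta>. 0 < x)"

definition partial_sum :: "nat list \<Rightarrow> nat \<Rightarrow> nat" where
  "partial_sum \<delta> j = sum_list (take j \<delta>)"

definition q_cumulative :: "nat \<Rightarrow> nat list \<Rightarrow> bool" where
  "q_cumulative q \<delta> \<longleftrightarrow> composition \<delta> \<and> \<delta> \<noteq> [] \<and>
     (\<forall>j\<in>{1..length \<delta>}. \<not> q dvd partial_sum \<delta> j)"

definition mu_mset :: "nat \<Rightarrow> (nat \<Rightarrow> nat) \<Rightarrow> nat multiset" where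
  "mu_mset q r = (\<Sum>i\<in>{1..q-1}. replicate_mset (r i) i)"

definition W :: "nat \<Rightarrow> (nat \<Rightarrow> nat) \<Rightarrow> nat list set" where
  "W q r = {\<delta>. q_cumulative q \<delta> \<and> mset \<delta> = mu_mset q r}"

definition rnorm :: "nat \<Rightarrow> (nat \<Rightarrow> nat) \<Rightarrow> nat" where
  "rnorm q r = (\<Sum>i\<in>{1..q-1}. i * r i)"

definition rq :: "nat \<Rightarrow> (nat \<Rightarrow> nat) \<Rightarrow> nat" where
  "rq q r = (q - 1) + (\<Sum>i\<in>{2..q-1}. (q - i) * r i)"

definition rmax :: "nat \<Rightarrow> (nat \<Rightarrow> nat) \<Rightarrow> nat" where
  "rmax q r = Max (r ` {1..q-1})"

end

theory Submission
  imports Defs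
begin

definition phi :: "nat \<Rightarrow> nat \<Rightarrow> int" where
  "phi q x = (if x = 1 then 1 else int x - int q)"

definition PP :: "nat \<Rightarrow> nat \<Rightarrow> nat list \<Rightarrow> bool" where
  "PP q t \<delta> \<longleftrightarrow> (\<forall>j\<in>{1..length \<delta>}. \<not> q dvd (t + sum_list (take j \<delta>)))"

definition cinv :: "nat \<Rightarrow> nat \<Rightarrow> nat multiset \<Rightarrow> bool" where
  "cinv q t R \<longleftrightarrow> set_mset R \<subseteq> {1..q-1} \<and> t < q \<and>
     (R \<noteq> {#} \<longrightarrow> \<not> q dvd (t + sum_mset R)) \<and>
     int t + sum_mset (image_mset (phi q) R) \<le> int q - 1 \<and>
     (\<forall>i. i \<noteq> 1 \<longrightarrow> count R i \<le> count R 1)"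

lemma phi_one [simp]: "phi q 1 = 1" "phi q (Suc 0) = 1" by (simp_all add: phi_def)
lemma phi_ne: "x \<noteq> 1 \<Longrightarrow> phi q x = int x - int q" by (simp add: phi_def)

lemma mod_add_dvd_iff:
  fixes a s q :: nat
  shows "q dvd (a mod q + s) \<longleftrightarrow> q dvd (a + s)"
  by (simp add: dvd_eq_mod_eq_0 mod_add_left_eq)

lemma prepend:
  assumes "PP q ((t + x) mod q) \<delta>" "\<not> q dvd (t + x)"
  shows "PP q t (x # \<delta>)"
  unfolding PP_def
proof
  fix j assume j: "j \<in> {1..length (x # \<delta>)}"
  show "\<not> q dvd (t + sum_list (take j (x # \<delta>)))"
  proof (cases "j = 1")
    case True then show ?thesis using assms(2) by simp
  next
    case False
    then obtain k where k: "j = Suc k" "k \<ge> 1" "k \<le> length \<delta>" using j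
      by (cases j) auto
    have "\<not> q dvd ((t + x) mod q + sum_list (take k \<delta>))"
      using assms(1) k unfolding PP_def by auto
    then have "\<not> q dvd (t + x + sum_list (take k \<delta>))"
      using mod_add_dvd_iff by blast
    then show ?thesis using k by (simp add: add.assoc)
  qed
qed

lemma phi_cong:
  "int q dvd (int (sum_mset R) - sum_mset (image_mset (phi q) R))"
proof (induction R)
  case empty then show ?case by simp
next
  case (add x R)
  have eq: "int (sum_mset (add_mset x R)) - sum_mset (image_mset (phi q) (add_mset x R))
     = (int x - phi q x) + (int (sum_mset R) - sum_mset (image_mset (phi q) R))"
    by simp
  have h: "int q dvd (int x - phi q x)"
    by (cases "x = 1") (auto simp: phi_def)
  show ?case by (subst eq) (rule dvd_add[OF h add.IH])
qed

lemma phi_bound: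
  assumes "\<forall>x\<in>#R. x \<noteq> 1 \<longrightarrow> t + x \<le> q"
  shows "sum_mset (image_mset (phi q) R) \<le> int (count R 1)
     - int t * int (size (filter_mset (\<lambda>x. x \<noteq> 1) R))
     - int (size (filter_mset (\<lambda>x. x \<noteq> 1 \<and> t + x < q) R))"
  using assms
proof (induction R)
  case empty then show ?case by simp
next
  case (add x R)
  then have IH: "sum_mset (image_mset (phi q) R) \<le> int (count R 1)
     - int t * int (size (filter_mset (\<lambda>x. x \<noteq> 1) R))
     - int (size (filter_mset (\<lambda>x. x \<noteq> 1 \<and> t + x < q) R))" by simp
  show ?case
  proof (cases "x = 1")
    case True then show ?thesis using IH by simp
  next
    case False
    then have "t + x \<le> q" using add.prems by simp
    then show ?thesis using IH False
      by (cases "t + x < q") (auto simp: phi_ne algebra_simps)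
  qed
qed

lemma phi_split:
  "sum_mset (image_mset (phi q) R) = int (count R 1)
     + sum_mset (image_mset (phi q) (filter_mset (\<lambda>x. x \<noteq> 1) R))"
  by (induction R) auto

lemma move_wrap:
  assumes "cinv q t (add_mset x R)" "x \<noteq> 1" "q < t + x"
  shows "cinv q (t + x - q) R"
proof -
  from assms(1) have s: "set_mset (add_mset x R) \<subseteq> {1..q-1}" and tq: "t < q"
    and sg: "\<not> q dvd (t + sum_mset (add_mset x R))"
    and L: "int t + sum_mset (image_mset (phi q) (add_mset x R)) \<le> int q - 1"
    and M: "\<forall>i. i \<noteq> 1 \<longrightarrow> count (add_mset x R) i \<le> count (add_mset x R) 1"
    unfolding cinv_def by auto
  have xq: "x \<le> q - 1" using s by auto
  have "t + sum_mset (add_mset x R) = (t + x - q + sum_mset R) + q" using assms(3) by simp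
  then have "\<not> q dvd (t + x - q + sum_mset R)" using sg by (metis dvd_add_right_iff dvd_refl)
  moreover have "int (t + x - q) + sum_mset (image_mset (phi q) R) \<le> int q - 1"
    using L assms(2,3) by (simp add: phi_ne of_nat_diff)
  moreover have "\<forall>i. i \<noteq> 1 \<longrightarrow> count R i \<le> count R 1"
  proof (intro allI impI)
    fix i :: nat assume "i \<noteq> 1"
    then have "count (add_mset x R) i \<le> count (add_mset x R) 1" using M by blast
    then show "count R i \<le> count R 1" using assms(2) by (auto split: if_splits)
  qed
  moreover have "t + x - q < q" using tq xq by linarith
  ultimately show ?thesis using s unfolding cinv_def by auto
qed

lemma move_one:
  assumes "cinv q t (add_mset 1 R)" "t + 1 < q"
    "\<forall>i. i \<noteq> 1 \<longrightarrow> count (add_mset 1 R) i < count (add_mset 1 R) 1"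
  shows "cinv q (t + 1) R"
proof -
  from assms(1) have s: "set_mset (add_mset 1 R) \<subseteq> {1..q-1}"
    and sg: "\<not> q dvd (t + sum_mset (add_mset 1 R))"
    and L: "int t + sum_mset (image_mset (phi q) (add_mset 1 R)) \<le> int q - 1"
    unfolding cinv_def by auto
  have "\<forall>i. i \<noteq> 1 \<longrightarrow> count R i \<le> count R 1"
  proof (intro allI impI)
    fix i :: nat assume "i \<noteq> 1"
    then have "count (add_mset 1 R) i < count (add_mset 1 R) 1" using assms(3) by blast
    then show "count R i \<le> count R 1" using \<open>i \<noteq> 1\<close> by auto
  qed
  moreover have "\<not> q dvd (t + 1 + sum_mset R)" using sg by (simp add: add.assoc)
  moreover have "int (t + 1) + sum_mset (image_mset (phi q) R) \<le> int q - 1"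
    using L by (simp add: phi_ne)
  ultimately show ?thesis using s assms(2) unfolding cinv_def by auto
qed

lemma move_nowrap:
  assumes "cinv q t (add_mset x R)" "x \<noteq> 1" "t + x < q"
    "int t + sum_mset (image_mset (phi q) (add_mset x R)) \<le> -1"
  shows "cinv q (t + x) R"
proof -
  from assms(1) have s: "set_mset (add_mset x R) \<subseteq> {1..q-1}"
    and sg: "\<not> q dvd (t + sum_mset (add_mset x R))"
    and M: "\<forall>i. i \<noteq> 1 \<longrightarrow> count (add_mset x R) i \<le> count (add_mset x R) 1"
    unfolding cinv_def by auto
  have "\<forall>i. i \<noteq> 1 \<longrightarrow> count R i \<le> count R 1"
  proof (intro allI impI)
    fix i :: nat assume "i \<noteq> 1"
    then have "count (add_mset x R) i \<le> count (add_mset x R) 1" using M by blast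
    then show "count R i \<le> count R 1" using assms(2) by (auto split: if_splits)
  qed
  moreover have "\<not> q dvd (t + x + sum_mset R)" using sg by (simp add: add.assoc)
  moreover have "int (t + x) + sum_mset (image_mset (phi q) R) \<le> int q - 1"
    using assms(4) assms(2) by (simp add: phi_ne)
  ultimately show ?thesis using s assms(3) unfolding cinv_def by auto
qed

lemma move_two:
  assumes "cinv q t (add_mset 1 (add_mset (q - t) R))" "t + 1 < q"
    "\<forall>i. i \<noteq> 1 \<and> i \<noteq> q - t \<longrightarrow> count (add_mset 1 (add_mset (q - t) R)) i
        < count (add_mset 1 (add_mset (q - t) R)) 1"
  shows "cinv q 1 R"
proof -
  let ?R = "add_mset 1 (add_mset (q - t) R)"
  from assms(1) have s: "set_mset ?R \<subseteq> {1..q-1}"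
    and sg: "\<not> q dvd (t + sum_mset ?R)"
    and L: "int t + sum_mset (image_mset (phi q) ?R) \<le> int q - 1"
    and M: "\<forall>i. i \<noteq> 1 \<longrightarrow> count ?R i \<le> count ?R 1"
    unfolding cinv_def by auto
  have ne: "q - t \<noteq> 1" using assms(2) by linarith
  have "\<forall>i. i \<noteq> 1 \<longrightarrow> count R i \<le> count R 1"
  proof (intro allI impI)
    fix i :: nat assume i1: "i \<noteq> 1"
    show "count R i \<le> count R 1"
    proof (cases "i = q - t")
      case True
      then have "count ?R i \<le> count ?R 1" using M i1 by blast
      then show ?thesis using True ne by auto
    next
      case False
      then have "count ?R i < count ?R 1" using assms(3) i1 by blast
      then show ?thesis using False ne i1 by auto
    qed
  qed
  moreover have "t + sum_mset ?R = (1 + sum_mset R) + q" using assms(2) by simp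
  then have "\<not> q dvd (1 + sum_mset R)" using sg by (metis dvd_add_right_iff dvd_refl)
  moreover have "int 1 + sum_mset (image_mset (phi q) R) \<le> int q - 1"
    using L ne assms(2) by (simp add: phi_ne of_nat_diff)
  moreover have "1 < q" using assms(2) by linarith
  ultimately show ?thesis using s unfolding cinv_def by auto
qed


lemma construct:
  assumes q2: "2 \<le> q" and "cinv q t R"
  shows "\<exists>\<delta>. mset \<delta> = R \<and> PP q t \<delta>"
  using assms(2)
proof (induction "size R" arbitrary: R t rule: less_induct)
  case less
  note inv = less.prems
  from inv have s: "set_mset R \<subseteq> {1..q-1}" and tq: "t < q"
    and sg: "R \<noteq> {#} \<Longrightarrow> \<not> q dvd (t + sum_mset R)"
    and L: "int t + sum_mset (image_mset (phi q) R) \<le> int q - 1"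
    and M: "\<And>i. i \<noteq> 1 \<Longrightarrow> count R i \<le> count R 1"
    unfolding cinv_def by auto
  show ?case
  proof (cases "R = {#}")
    case True then show ?thesis by (intro exI[of _ "[]"]) (simp add: PP_def)
  next
    case Rne: False
    show ?thesis
    proof (cases "\<exists>x\<in>#R. x \<noteq> 1 \<and> q < t + x")
      case True
      then obtain x where x: "x \<in># R" "x \<noteq> 1" "q < t + x" by blast
      define R' where "R' = R - {#x#}"
      have RR: "R = add_mset x R'" using x(1) unfolding R'_def by simp
      have xq: "x \<le> q - 1" using s x(1) by auto
      have c: "cinv q (t + x - q) R'" using move_wrap[of q t x R'] inv RR x by simp
      obtain \<delta> where d: "mset \<delta> = R'" "PP q (t + x - q) \<delta>"
        using less.hyps[of R' "t + x - q"] c RR by auto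
      have m: "(t + x) mod q = t + x - q" using x(3) tq xq
        by (simp add: le_mod_geq less_imp_le_nat mod_less)
      have nd: "\<not> q dvd (t + x)" using m x(3) tq xq
        by (metis dvd_eq_mod_eq_0 zero_less_diff add_diff_cancel_left' diff_is_0_eq less_or_eq_imp_le
           not_less)
      show ?thesis using prepend[of q t x \<delta>] d m nd RR by (intro exI[of _ "x # \<delta>"]) simp
    next
      case nowrap: False
      show ?thesis
      proof (cases "t + 1 < q \<and> 1 \<in># R \<and> (\<forall>i. i \<noteq> 1 \<longrightarrow> count R i < count R 1)")
        case True
        define R' where "R' = R - {#1#}"
        have RR: "R = add_mset 1 R'" using True unfolding R'_def by simp
        have c: "cinv q (t + 1) R'" using move_one[of q t R'] inv RR True by simp
        obtain \<delta> where d: "mset \<delta> = R'" "PP q (t + 1) \<delta>"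
          using less.hyps[of R' "t + 1"] c RR by auto
        have m: "(t + 1) mod q = t + 1" using True by simp
        have nd: "\<not> q dvd (t + 1)" using True
          by (metis add_gr_0 dvd_imp_le zero_less_one not_le)
        show ?thesis using prepend[of q t 1 \<delta>] d m nd RR by (intro exI[of _ "1 # \<delta>"]) simp
      next
        case no1: False
        show ?thesis
        proof (cases "t + 1 < q \<and> 1 \<in># R \<and> (q - t) \<in># R \<and>
            (\<forall>i. i \<noteq> 1 \<and> i \<noteq> q - t \<longrightarrow> count R i < count R 1)")
          case True
          have ne: "q - t \<noteq> 1" using True by linarith
          define R' where "R' = R - {#1#} - {#q - t#}"
          have RR: "R = add_mset 1 (add_mset (q - t) R')" using True ne unfolding R'_def
            by (metis insert_DiffM in_diffD diff_single_trivial insert_noteq_member)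
          have c: "cinv q 1 R'" using move_two[of q t R'] inv RR True by simp
          obtain \<delta> where d: "mset \<delta> = R'" "PP q 1 \<delta>"
            using less.hyps[of R' 1] c RR by auto
          have m2: "(t + 1 + (q - t)) mod q = 1" using True q2
            by (simp add: mod_if)
          have nd2: "\<not> q dvd (t + 1 + (q - t))" using m2 q2 by (auto simp: dvd_eq_mod_eq_0)
          have p2: "PP q (t + 1) ((q - t) # \<delta>)" using prepend[of q "t+1" "q - t" \<delta>] d m2 nd2 by simp
          have m: "(t + 1) mod q = t + 1" using True by simp
          have nd: "\<not> q dvd (t + 1)" using True
            by (metis add_gr_0 dvd_imp_le zero_less_one not_le)
          show ?thesis using prepend[of q t 1 "(q - t) # \<delta>"] p2 d m nd RR
            by (intro exI[of _ "1 # (q - t) # \<delta>"]) simp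
        next
          case no2: False
          show ?thesis
          proof (cases "\<exists>x\<in>#R. x \<noteq> 1 \<and> t + x < q \<and> int t + sum_mset (image_mset (phi q) R) \<le> -1")
            case True
            then obtain x where x: "x \<in># R" "x \<noteq> 1" "t + x < q"
              "int t + sum_mset (image_mset (phi q) R) \<le> -1" by blast
            define R' where "R' = R - {#x#}"
            have RR: "R = add_mset x R'" using x(1) unfolding R'_def by simp
            have c: "cinv q (t + x) R'" using move_nowrap[of q t x R'] inv RR x by simp
            obtain \<delta> where d: "mset \<delta> = R'" "PP q (t + x) \<delta>"
              using less.hyps[of R' "t + x"] c RR by auto
            have m: "(t + x) mod q = t + x" using x by simp
            have x0: "x > 0" using s x(1) by auto
            have nd: "\<not> q dvd (t + x)" using x(3) x0
              by (metis add_gr_0 dvd_imp_le not_le)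
            show ?thesis using prepend[of q t x \<delta>] d m nd RR by (intro exI[of _ "x # \<delta>"]) simp
          next
            case no4: False
            have nw: "\<forall>x\<in>#R. x \<noteq> 1 \<longrightarrow> t + x \<le> q" using nowrap by auto
            define A where "A = count R 1"
            define N where "N = size (filter_mset (\<lambda>x. x \<noteq> 1) R)"
            define N1 where "N1 = size (filter_mset (\<lambda>x. x \<noteq> 1 \<and> t + x < q) R)"
            have B: "sum_mset (image_mset (phi q) R) \<le> int A - int t * int N - int N1"
              using phi_bound[OF nw] unfolding A_def N_def N1_def .
            have NN1: "N1 \<le> N"
            proof -
              have "filter_mset (\<lambda>x. x \<noteq> 1 \<and> t + x < q) R
                  = filter_mset (\<lambda>x. t + x < q) (filter_mset (\<lambda>x. x \<noteq> 1) R)"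
                by (simp add: filter_filter_mset conj_commute)
              then show ?thesis unfolding N_def N1_def by (metis size_filter_mset_lesseq)
            qed
            have tq1: "t + 1 < q"
            proof (rule ccontr)
              assume "\<not> t + 1 < q"
              then have tt: "t = q - 1" using tq by linarith
              have "N = 0" unfolding N_def
              proof -
                have "filter_mset (\<lambda>x. x \<noteq> 1) R = {#}"
                proof (rule ccontr)
                  assume "filter_mset (\<lambda>x. x \<noteq> 1) R \<noteq> {#}"
                  then obtain y where "y \<in># R" "y \<noteq> 1" by fastforce
                  then show False using nw tt s q2 by force
                qed
                then show "size (filter_mset (\<lambda>x. x \<noteq> 1) R) = 0" by simp
              qed
              then have "N1 = 0" using NN1 by simp
              have "A \<ge> 1"
              proof (rule ccontr)
                assume "\<not> A \<ge> 1"
                then have "A = 0" by simp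
                obtain y where y: "y \<in># R" using Rne by blast
                have "y \<noteq> 1" using \<open>A = 0\<close> y unfolding A_def by (metis count_eq_zero_iff)
                then have "y \<in># filter_mset (\<lambda>x. x \<noteq> 1) R" using y by simp
                then show False using \<open>N = 0\<close> unfolding N_def by (metis size_eq_0_iff_empty empty_iff set_mset_empty)
              qed
              have fe: "filter_mset (\<lambda>x. x \<noteq> 1) R = {#}" using \<open>N = 0\<close> unfolding N_def by simp
              have "sum_mset (image_mset (phi q) R) = int A"
                using phi_split[of q R] unfolding A_def by (simp only: fe) simp
              then show False using L \<open>A \<ge> 1\<close> tt q2 by simp
            qed
            obtain i0 where i0: "i0 \<noteq> 1" "count R i0 \<ge> A" "A \<ge> 1"
            proof -
              have "\<not> (1 \<in># R \<and> (\<forall>i. i \<noteq> 1 \<longrightarrow> count R i < count R 1))" using no1 tq1 by blast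
              moreover have "1 \<in># R"
              proof (rule ccontr)
                assume n1: "1 \<notin># R"
                obtain y where y: "y \<in># R" using Rne by blast
                have "y \<noteq> 1" using n1 y by auto
                then have "count R y \<le> count R 1" using M by blast
                moreover have "count R 1 = 0" using n1 by (simp add: count_eq_zero_iff)
                moreover have "count R y > 0" using y by simp
                ultimately show False by simp
              qed
              ultimately obtain i where "i \<noteq> 1" "\<not> count R i < count R 1" by blast
              moreover have "A \<ge> 1" using \<open>1 \<in># R\<close> unfolding A_def by (simp add: Suc_le_eq)
              ultimately show ?thesis using that unfolding A_def by (meson not_less)
            qed
            obtain i1 where i1: "i1 \<noteq> 1" "t + i1 < q" "count R i1 \<ge> A"
            proof (cases "q - t \<in># R")
              case False
              have "count R i0 > 0" using i0 by linarith
              then have "i0 \<in># R" by simp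
              then have "i0 \<noteq> q - t" using False by auto
              moreover have "t + i0 \<le> q" using nw \<open>i0 \<in># R\<close> i0 by auto
              ultimately have "t + i0 < q" by linarith
              then show ?thesis using that i0 by blast
            next
              case True
              have "1 \<in># R" using i0 unfolding A_def by (simp add: Suc_le_eq)
              then obtain i where i: "i \<noteq> 1" "i \<noteq> q - t" "\<not> count R i < count R 1"
                using no2 True tq1 by blast
              then have "count R i > 0" using i0 unfolding A_def by linarith
              then have "i \<in># R" by simp
              then have "t + i \<le> q" using nw i by auto
              then have "t + i < q" using i(2) by linarith
              moreover have "count R i \<ge> A" using i unfolding A_def by linarith
              ultimately show ?thesis using that i by blast
            qed
            have "count R i1 > 0" using i1 i0 by linarith
            then have i1R: "i1 \<in># R" by simp
            have "count R i1 = count (filter_mset (\<lambda>x. x \<noteq> 1 \<and> t + x < q) R) i1"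
              using i1 by simp
            moreover have "count (filter_mset (\<lambda>x. x \<noteq> 1 \<and> t + x < q) R) i1 \<le> N1"
              unfolding N1_def by (rule count_le_size)
            ultimately have AN1: "A \<le> N1" using i1 by linarith
            have nn: "\<not> int t + sum_mset (image_mset (phi q) R) \<le> -1"
              using no4 i1R i1 by blast
            have "int t * int N \<ge> int t" using AN1 NN1 i0 by (simp add: mult_le_cancel_left1)
            then have z: "int t + sum_mset (image_mset (phi q) R) = 0"
              using B nn AN1 by linarith
            have "int q dvd int (t + sum_mset R)"
            proof -
              have "int q dvd (int (sum_mset R) - sum_mset (image_mset (phi q) R))"
                by (rule phi_cong)
              moreover have "int (t + sum_mset R) = (int (sum_mset R) - sum_mset (image_mset (phi q) R))"
                using z by simp
              ultimately show ?thesis by simp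
            qed
            then have "q dvd t + sum_mset R" by (simp only: int_dvd_int_iff)
            then show ?thesis using sg Rne by blast
          qed
        qed
      qed
    qed
  qed
qed


lemma sum_mset_sum_gen:
  "(\<Sum>x\<in>#(\<Sum>i\<in>A. M i). f x) = (\<Sum>i\<in>A. \<Sum>x\<in>#M i. (f x :: 'b :: comm_monoid_add))"
  by (induction A rule: infinite_finite_induct) auto

lemma count_mu: "count (mu_mset q r) i = (if i \<in> {1..q-1} then r i else 0)"
  unfolding mu_mset_def count_sum by (simp add: count_replicate_mset)

lemma set_mu: "set_mset (mu_mset q r) \<subseteq> {1..q-1}"
proof
  fix x assume "x \<in># mu_mset q r"
  then have "count (mu_mset q r) x > 0" by simp
  then show "x \<in> {1..q-1}" unfolding count_mu by (auto split: if_splits)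
qed

lemma sum_mu: "sum_mset (mu_mset q r) = rnorm q r"
proof -
  have "sum_mset (mu_mset q r) = (\<Sum>x\<in>#mu_mset q r. x)" by simp
  also have "\<dots> = (\<Sum>i\<in>{1..q-1}. \<Sum>x\<in>#replicate_mset (r i) i. x)"
    unfolding mu_mset_def by (rule sum_mset_sum_gen)
  also have "\<dots> = rnorm q r" unfolding rnorm_def by (simp add: mult.commute)
  finally show ?thesis .
qed

lemma phi_mu:
  assumes "2 \<le> q"
  shows "sum_mset (image_mset (phi q) (mu_mset q r)) = int (r 1) - int (rq q r) + int q - 1"
proof -
  have e1: "sum_mset (image_mset (phi q) (mu_mset q r)) = (\<Sum>i\<in>{1..q-1}. \<Sum>x\<in>#replicate_mset (r i) i. phi q x)"
    unfolding mu_mset_def by (rule sum_mset_sum_gen)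
  have e2: "(\<Sum>i\<in>{1..q-1}. \<Sum>x\<in>#replicate_mset (r i) i. phi q x) = (\<Sum>i\<in>{1..q-1}. int (r i) * phi q i)" by simp
  have S: "{1..q-1} = insert 1 {2..q-1}" using assms by auto
  have e3: "(\<Sum>i\<in>{1..q-1}. int (r i) * phi q i)
      = int (r 1) + (\<Sum>i\<in>{2..q-1}. int (r i) * phi q i)" unfolding S by simp
  have e4: "(\<Sum>i\<in>{2..q-1}. int (r i) * phi q i) = (\<Sum>i\<in>{2..q-1}. - int ((q - i) * r i))"
  proof (rule sum.cong)
    fix i assume "i \<in> {2..q-1}"
    then have "i \<noteq> 1" "i \<le> q" by auto
    then show "int (r i) * phi q i = - int ((q - i) * r i)"
      by (simp add: phi_ne of_nat_diff algebra_simps)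
  qed simp
  have e5: "(\<Sum>i\<in>{2..q-1}. - int ((q - i) * r i)) = - (\<Sum>i\<in>{2..q-1}. int ((q - i) * r i))"
    by (simp add: sum_negf)
  have e: "sum_mset (image_mset (phi q) (mu_mset q r))
      = int (r 1) - (\<Sum>i\<in>{2..q-1}. int ((q - i) * r i))"
    using e1 e2 e3 e4 e5 by linarith
  have "int (rq q r) = int (q - 1) + (\<Sum>i\<in>{2..q-1}. int ((q - i) * r i))"
    unfolding rq_def by simp
  then show ?thesis using e assms by (simp add: of_nat_diff)
qed

lemma sum_list_map_mset: "sum_list (map f xs) = sum_mset (image_mset f (mset xs))"
  by (induction xs) auto

lemma PP_prefix: assumes "PP q t (xs @ ys)" shows "PP q t xs"
  unfolding PP_def
proof
  fix j assume j: "j \<in> {1..length xs}"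
  then have "j \<in> {1..length (xs @ ys)}" by simp
  then have a: "\<not> q dvd t + sum_list (take j (xs @ ys))" using assms unfolding PP_def by blast
  have b: "take j (xs @ ys) = take j xs" using j by simp
  from a show "\<not> q dvd t + sum_list (take j xs)" unfolding b .
qed

lemma mod_step:
  fixes a x q :: nat
  assumes "a < q" "x < q"
  shows "int ((a + x) mod q) \<ge> int a + int x - int q"
proof (cases "a + x < q")
  case True then show ?thesis by simp
next
  case False
  then have "(a + x) mod q = a + x - q" using assms by (simp add: mod_if)
  then show ?thesis using False by simp
qed

lemma necessity:
  assumes "2 \<le> q" "set xs \<subseteq> {1..q-1}" "PP q 0 xs"
  shows "sum_list (map (phi q) xs) \<le> int (sum_list xs mod q)"
  using assms(2,3)
proof (induction xs rule: rev_induct)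
  case Nil then show ?case by simp
next
  case (snoc x xs)
  have IH: "sum_list (map (phi q) xs) \<le> int (sum_list xs mod q)"
    using snoc PP_prefix by auto
  have x: "1 \<le> x" "x \<le> q - 1" using snoc.prems by auto
  have nd: "\<not> q dvd sum_list (xs @ [x])"
  proof -
    have "length (xs @ [x]) \<in> {1..length (xs @ [x])}" by simp
    then have "\<not> q dvd (0 + sum_list (take (length (xs @ [x])) (xs @ [x])))"
      using snoc.prems(2) unfolding PP_def by blast
    then show ?thesis by simp
  qed
  define a where "a = sum_list xs mod q"
  have aq: "a < q" unfolding a_def using assms(1) by simp
  have m: "sum_list (xs @ [x]) mod q = (a + x) mod q" unfolding a_def by (simp add: mod_add_left_eq)
  have "phi q x \<le> int ((a + x) mod q) - int a"
  proof (cases "x = 1")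
    case True
    have "(a + 1) mod q \<noteq> 0" using nd m True by (simp add: dvd_eq_mod_eq_0)
    then have "a + 1 < q" using aq by (cases "a + 1 = q") auto
    then show ?thesis using True by simp
  next
    case False
    have xq: "x < q" using x(2) assms(1) by linarith
    then show ?thesis using mod_step[OF aq xq] False by (simp add: phi_ne)
  qed
  then show ?case using IH m unfolding a_def by simp
qed

theorem lemma1:
  fixes q :: nat and r :: "nat \<Rightarrow> nat"
  assumes "q \<ge> 2" and "r 1 = rmax q r"
  shows "W q r \<noteq> {} \<longleftrightarrow> (\<not> q dvd rnorm q r \<and> rmax q r \<le> rq q r)"
proof
  assume "W q r \<noteq> {}"
  then obtain \<delta> where d: "q_cumulative q \<delta>" "mset \<delta> = mu_mset q r" unfolding W_def by auto
  have ne: "\<delta> \<noteq> []" and pc: "\<forall>j\<in>{1..length \<delta>}. \<not> q dvd partial_sum \<delta> j"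
    using d(1) unfolding q_cumulative_def by auto
  have "length \<delta> \<in> {1..length \<delta>}" using ne by (simp add: Suc_leI)
  then have "\<not> q dvd partial_sum \<delta> (length \<delta>)" using pc by blast
  then have "\<not> q dvd sum_list \<delta>" unfolding partial_sum_def by simp
  moreover have "sum_list \<delta> = rnorm q r" using d(2) sum_mu by (metis sum_mset_sum_list)
  ultimately have i: "\<not> q dvd rnorm q r" by simp
  have "set \<delta> = set_mset (mu_mset q r)" using d(2) by (metis set_mset_mset)
  then have sd: "set \<delta> \<subseteq> {1..q-1}" using set_mu[of q r] by simp
  have pp: "PP q 0 \<delta>" using pc unfolding PP_def partial_sum_def by simp
  have "sum_list (map (phi q) \<delta>) \<le> int (sum_list \<delta> mod q)"
    using necessity[OF assms(1) sd pp] .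
  also have "\<dots> \<le> int q - 1" using assms(1) by (simp add: less_Suc_eq_le[symmetric] of_nat_diff)
  finally have "sum_mset (image_mset (phi q) (mu_mset q r)) \<le> int q - 1"
    using d(2) sum_list_map_mset by metis
  then have "r 1 \<le> rq q r" using phi_mu[OF assms(1), of r] by simp
  then show "\<not> q dvd rnorm q r \<and> rmax q r \<le> rq q r" using i assms(2) by simp
next
  assume h: "\<not> q dvd rnorm q r \<and> rmax q r \<le> rq q r"
  let ?R = "mu_mset q r"
  have Rne: "?R \<noteq> {#}" using h sum_mu[of q r] by auto
  have M: "\<forall>i. i \<noteq> 1 \<longrightarrow> count ?R i \<le> count ?R 1"
  proof (intro allI impI)
    fix i :: nat assume "i \<noteq> 1"
    have "(1::nat) \<in> {1..q-1}" using assms(1) by auto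
    then have c1: "count ?R 1 = r 1" by (simp only: count_mu if_True)
    show "count ?R i \<le> count ?R 1"
    proof (cases "i \<in> {1..q-1}")
      case True
      have "r i \<le> Max (r ` {1..q-1})" using True by (intro Max_ge) auto
      moreover have "count ?R i = r i" using True by (simp only: count_mu if_True)
      ultimately show ?thesis using c1 assms(2) unfolding rmax_def by simp
    next
      case False
      then have "count ?R i = 0" by (simp only: count_mu if_False)
      then show ?thesis by simp
    qed
  qed
  have L: "int 0 + sum_mset (image_mset (phi q) ?R) \<le> int q - 1"
    using phi_mu[OF assms(1), of r] h assms(2) by simp
  have "cinv q 0 ?R" unfolding cinv_def using set_mu[of q r] assms(1) h sum_mu[of q r] L M by auto
  then obtain \<delta> where d: "mset \<delta> = ?R" "PP q 0 \<delta>" using construct[OF assms(1)] by blast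
  have "q_cumulative q \<delta>"
    unfolding q_cumulative_def composition_def
  proof (intro conjI)
    have "set \<delta> = set_mset ?R" using d(1) by (metis set_mset_mset)
    then show "\<forall>x\<in>set \<delta>. 0 < x" using set_mu[of q r] by force
    show "\<delta> \<noteq> []" using Rne d(1) by auto
    show "\<forall>j\<in>{1..length \<delta>}. \<not> q dvd partial_sum \<delta> j"
      using d(2) unfolding PP_def partial_sum_def by simp
  qed
  then show "W q r \<noteq> {}" using d(1) unfolding W_def by auto
qed

end
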